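(* Let $d\ge2$ and $L\ge1$ be integers, and define for real $x\in[0,L-1]$ $$\rho(x)=\frac{\Gamma(L+d)\,\Gamma(L)}{\Gamma(L+d+x)\,\Gamma(L-x)}.$$ Then $0<\rho(x)\le \exp\!\left(-\frac{2x(x+d)}{2L+d}\right)$ for all $x\in[0,L-1]$. In particular, for integers $0\le k\le L-1$, $$\frac{(L-1+d)!\,(L-1)!}{(L-1+d+k)!\,(L-1-k)!}\le e^{-\frac{2k(k+d)}{2L+d}}.$$
   Context: $\Gamma$ is the Euler gamma function, $\Gamma(n)=(n-1)!$. *)

theory Defs
  imports "HOL-Analysis.Analysis"
begin

definition rho :: "nat \<Rightarrow> nat \<Rightarrow> real \<Rightarrow> real" where
  "rho d L x = Gamma (real L + real d) * Gamma (real L)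
      / (Gamma (real L + real d + x) * Gamma (real L - x))"

end

theory Submission
  imports Defs
begin

lemma trig_aux: "(x::real) > 0 \<Longrightarrow> Polygamma 1 x \<ge> 1 / x"
proof -
  assume x: "x > 0"
  have s1: "(\<lambda>k. inverse ((x + of_nat k)^2)) sums Polygamma 1 x"
    using Polygamma_LIMSEQ[of x 1] x by (simp add: power2_eq_square)
  have lim: "(\<lambda>n. inverse (x + real n)) \<longlonglongrightarrow> 0"
    by (intro filterlim_compose[OF tendsto_inverse_0] tendsto_add_filterlim_at_infinity[OF tendsto_const]
        filterlim_at_top_imp_at_infinity filterlim_real_sequentially)
  have s2: "(\<lambda>n. inverse (x + real n) - inverse (x + real (Suc n))) sums (inverse (x + real 0) - 0)"
    by (rule telescope_sums'[OF lim])
  have le: "inverse (x + real n) - inverse (x + real (Suc n)) \<le> inverse ((x + of_nat n)^2)" for n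
  proof -
    have p: "x + real n > 0" using x by simp
    have "inverse (x + real n) - inverse (x + real (Suc n)) = 1 / ((x + real n) * (x + real n + 1))"
      using p by (simp add: field_simps)
    also have "\<dots> \<le> 1 / ((x + real n) * (x + real n))"
      using p by (intro divide_left_mono mult_left_mono) auto
    finally show ?thesis by (simp add: power2_eq_square divide_inverse)
  qed
  from sums_le[OF le s2 s1] show ?thesis by (simp add: divide_inverse)
qed

lemma digamma_diff: assumes "(0::real) < a" "a \<le> b"
  shows "Digamma b - Digamma a \<ge> ln b - ln a"
proof -
  have "(\<lambda>t. Digamma t - ln t) a \<le> (\<lambda>t. Digamma t - ln t) b"
  proof (rule DERIV_nonneg_imp_nondecreasing[OF assms(2)])
    fix t assume t: "a \<le> t" "t \<le> b"
    then have tp: "t > 0" using assms by simp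
    have "((\<lambda>t. Digamma t - ln t) has_real_derivative (Polygamma 1 t - 1 / t)) (at t)"
      using tp by (auto intro!: derivative_eq_intros elim!: nonpos_Ints_cases simp: divide_inverse)
    moreover have "Polygamma 1 t - 1 / t \<ge> 0" using trig_aux[OF tp] by simp
    ultimately show "\<exists>y. ((\<lambda>t. Digamma t - ln t) has_real_derivative y) (at t) \<and> y \<ge> 0" by blast
  qed
  then show ?thesis by simp
qed

lemma logmean: assumes "(0::real) < a" "a \<le> b"
  shows "ln b - ln a \<ge> 2 * (b - a) / (a + b)"
proof -
  have "(\<lambda>t. ln t - ln a - 2 * (t - a) / (a + t)) a \<le> (\<lambda>t. ln t - ln a - 2 * (t - a) / (a + t)) b"
  proof (rule DERIV_nonneg_imp_nondecreasing[OF assms(2)])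
    fix t assume t: "a \<le> t" "t \<le> b"
    then have tp: "t > 0" using assms by simp
    have apt: "a + t > 0" using tp assms by simp
    have "((\<lambda>t. ln t - ln a - 2 * (t - a) / (a + t)) has_real_derivative
        (1 / t - 4 * a / (a + t)^2)) (at t)"
      using tp apt by (auto intro!: derivative_eq_intros simp: field_simps power2_eq_square)
    moreover have "1 / t - 4 * a / (a + t)^2 \<ge> 0"
    proof -
      have "(a+t)^2 - 4*a*t = (t-a)^2" by algebra
      then have "4*a*t \<le> (a+t)^2" by (smt (verit) zero_le_power2)
      then have "4 * a / (a + t)^2 \<le> 1 / t" using tp apt assms(1) by (simp add: divide_simps)
      then show ?thesis by simp
    qed
    ultimately show "\<exists>y. ((\<lambda>t. ln t - ln a - 2 * (t - a) / (a + t)) has_real_derivative y) (at t) \<and> y \<ge> 0"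
      by metis
  qed
  then show ?thesis by simp
qed

theorem mainTheorem6:
  fixes d L :: nat
  assumes "d \<ge> 2" and "L \<ge> 1"
  shows "(\<forall>x::real. 0 \<le> x \<and> x \<le> real L - 1 \<longrightarrow>
            0 < rho d L x \<and>
            rho d L x \<le> exp (- (2 * x * (x + real d)) / (2 * real L + real d)))
       \<and> (\<forall>k::nat. k \<le> L - 1 \<longrightarrow>
            real (fact (L - 1 + d) * fact (L - 1)) / real (fact (L - 1 + d + k) * fact (L - 1 - k))
              \<le> exp (- (2 * real k * (real k + real d)) / (2 * real L + real d)))"
proof -
  define S where "S = 2 * real L + real d"
  have Sp: "S > 0" using assms unfolding S_def by simp
  have P1: "0 < rho d L x \<and> rho d L x \<le> exp (- (2 * x * (x + real d)) / (2 * real L + real d))"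
    if x: "0 \<le> x" "x \<le> real L - 1" for x :: real
  proof -
    define g where "g = (\<lambda>t. ln_Gamma (real L + real d + t) + ln_Gamma (real L - t) - 2 * t * (t + real d) / S)"
    have "g 0 \<le> g x"
    proof (rule DERIV_nonneg_imp_nondecreasing[OF x(1)])
      fix t assume t: "0 \<le> t" "t \<le> x"
      define a where "a = real L - t"
      define b where "b = real L + real d + t"
      have a1: "a \<ge> 1" using t x unfolding a_def by simp
      have ab: "a \<le> b" using t unfolding a_def b_def by simp
      have abS: "a + b = S" unfolding a_def b_def S_def by simp
      have bp: "b > 0" using a1 ab by simp
      have "(g has_real_derivative (Digamma b - Digamma a - (4 * t + 2 * real d) / S)) (at t)"
        unfolding g_def a_def b_def using a1 bp Sp unfolding a_def b_def
        by (auto intro!: derivative_eq_intros)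
      moreover have "Digamma b - Digamma a - (4 * t + 2 * real d) / S \<ge> 0"
      proof -
        have "Digamma b - Digamma a \<ge> 2 * (b - a) / (a + b)"
          using digamma_diff[of a b] logmean[of a b] a1 ab by simp
        moreover have "2 * (b - a) / (a + b) = (4 * t + 2 * real d) / S"
          using abS unfolding a_def b_def by (simp add: field_simps)
        ultimately show ?thesis by simp
      qed
      ultimately show "\<exists>y. (g has_real_derivative y) (at t) \<and> y \<ge> 0" by blast
    qed
    then have ineq: "ln_Gamma (real L + real d) + ln_Gamma (real L) - ln_Gamma (real L + real d + x) - ln_Gamma (real L - x)
        \<le> - (2 * x * (x + real d)) / S"
      proof - have g0: "g 0 = ln_Gamma (real L + real d) + ln_Gamma (real L)" by (simp add: g_def) have gx: "g x = ln_Gamma (real L + real d + x) + ln_Gamma (real L - x) - 2 * x * (x + real d) / S" by (simp add: g_def) have m: "- (2 * x * (x + real d)) / S = - (2 * x * (x + real d) / S)" by simp from \<open>g 0 \<le> g x\<close> show ?thesis unfolding g0 gx m by linarith qed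
    have pos: "real L + real d > 0" "real L > 0" "real L + real d + x > 0" "real L - x > 0"
      using assms x by auto
    have rho_eq: "rho d L x = exp (ln_Gamma (real L + real d) + ln_Gamma (real L) - ln_Gamma (real L + real d + x) - ln_Gamma (real L - x))"
      unfolding rho_def Gamma_real_pos_exp[OF pos(1)] Gamma_real_pos_exp[OF pos(2)] Gamma_real_pos_exp[OF pos(3)] Gamma_real_pos_exp[OF pos(4)] by (simp add: exp_add exp_diff)
    show ?thesis unfolding rho_eq S_def[symmetric] using ineq by simp
  qed
  show ?thesis
  proof (intro conjI allI impI)
    fix x :: real assume "0 \<le> x \<and> x \<le> real L - 1"
    then show "0 < rho d L x" "rho d L x \<le> exp (- (2 * x * (x + real d)) / (2 * real L + real d))"
      using P1 by auto
  next
    fix k :: nat assume k: "k \<le> L - 1"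
    have e1: "real L + real d = 1 + real (L - 1 + d)" using assms by (auto simp: of_nat_diff)
    have e2: "real L = 1 + real (L - 1)" using assms by (auto simp: of_nat_diff)
    have e3: "1 + real (L - 1 + d) + real k = 1 + real (L - 1 + d + k)" by simp
    have e4: "real L - real k = 1 + real (L - 1 - k)" using assms k by (auto simp: of_nat_diff)
    have "rho d L (real k) = real (fact (L - 1 + d) * fact (L - 1)) / real (fact (L - 1 + d + k) * fact (L - 1 - k))"
      unfolding rho_def unfolding e4 unfolding e1 unfolding e2 unfolding e3 unfolding Gamma_fact by simp
    moreover have "real k \<le> real L - 1" using k assms by linarith
    ultimately show "real (fact (L - 1 + d) * fact (L - 1)) / real (fact (L - 1 + d + k) * fact (L - 1 - k))
              \<le> exp (- (2 * real k * (real k + real d)) / (2 * real L + real d))"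
      using P1[of "real k"] by simp
  qed
qed

end
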